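(* Let $p$ be a prime and $m,n$ positive integers. Then $$\tfrac12\big[(m+n)^{2p}+(n\bmod 2)(m+n)^p\big]\equiv\tfrac12\big[m^{2p}+(n\bmod2)m^p\big]\pmod n,$$ i.e., the difference of the two sides is an integer divisible by $n$. *)

theory Defs
  imports Complex_Main "HOL-Computational_Algebra.Primes"
begin

end

theory Submission
  imports Defs
begin

lemma pow_cong_int:
  fixes a b d :: int and k :: nat
  assumes "a mod d = b mod d"
  shows "a ^ k mod d = b ^ k mod d"
  by (metis assms power_mod)

lemma key:
  fixes m n p :: nat
  assumes "n > 0"
  shows "(2 * int n) dvd ((int m + int n) ^ (2*p) + int (n mod 2) * (int m + int n) ^ p
          - (int m ^ (2*p) + int (n mod 2) * int m ^ p))"
proof (cases "even n")
  case True
  then obtain q where q: "n = 2*q" by blast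
  have "(int m + int n)^2 mod (2*int n) = (int m)^2 mod (2*int n)"
  proof -
    have "(int m + int n)^2 = (int m)^2 + (2*int n) * (int m + int q)"
      using q by (simp add: power2_eq_square algebra_simps)
    then show ?thesis by simp
  qed
  then have "((int m + int n)^2)^p mod (2*int n) = ((int m)^2)^p mod (2*int n)"
    by (rule pow_cong_int)
  then have "(2*int n) dvd ((int m + int n)^2)^p - ((int m)^2)^p"
    using mod_eq_dvd_iff by blast
  moreover have "n mod 2 = 0" using True by simp
  ultimately show ?thesis by (simp add: power_mult)
next
  case False
  have nm: "n mod 2 = 1" using False by presburger
  have ev: "even (x^(2*p) + x^p)" for x :: int
  proof -
    have "x^(2*p) + x^p = x^p * (x^p + 1)" by (simp add: power_mult power2_eq_square algebra_simps)
    moreover have "even (x^p * (x^p + 1))" by (cases "even x") auto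
    ultimately show ?thesis by metis
  qed
  have "(int m + int n) mod int n = int m mod int n" by simp
  then have h1: "(int m + int n)^k mod int n = int m ^ k mod int n" for k
    by (rule pow_cong_int)
  have "((int m + int n)^(2*p) + (int m + int n)^p) mod int n = (int m ^(2*p) + int m ^ p) mod int n"
    using h1 by (metis mod_add_cong)
  then have d1: "int n dvd ((int m + int n)^(2*p) + (int m + int n)^p) - (int m ^(2*p) + int m ^ p)"
    using mod_eq_dvd_iff by blast
  have d2: "2 dvd ((int m + int n)^(2*p) + (int m + int n)^p) - (int m ^(2*p) + int m ^ p)"
    using ev[of "int m + int n"] ev[of "int m"] by simp
  have cop: "coprime 2 (int n)" using False by simp
  have "(2 * int n) dvd ((int m + int n)^(2*p) + (int m + int n)^p) - (int m ^(2*p) + int m ^ p)"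
    using d1 d2 cop by (simp add: divides_mult)
  then show ?thesis using nm by simp
qed

theorem lemma4:
  fixes p m n :: nat
  assumes "prime p" and "m > 0" and "n > 0"
  shows "\<exists>k::int.
    (1/2) * ((real m + real n) ^ (2*p) + real (n mod 2) * (real m + real n) ^ p)
    - (1/2) * (real m ^ (2*p) + real (n mod 2) * real m ^ p)
    = real_of_int k * real n"
proof -
  obtain k where k: "(int m + int n) ^ (2*p) + int (n mod 2) * (int m + int n) ^ p
          - (int m ^ (2*p) + int (n mod 2) * int m ^ p) = 2 * int n * k"
    using key[OF assms(3), of m p] by (auto elim: dvdE)
  have "real_of_int ((int m + int n) ^ (2*p) + int (n mod 2) * (int m + int n) ^ p
          - (int m ^ (2*p) + int (n mod 2) * int m ^ p)) = real_of_int (2 * int n * k)"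
    using k by simp
  then have "((real m + real n) ^ (2*p) + real (n mod 2) * (real m + real n) ^ p)
          - (real m ^ (2*p) + real (n mod 2) * real m ^ p) = 2 * real n * real_of_int k"
    by simp
  then show ?thesis by (intro exI[of _ k]) (simp add: algebra_simps)
qed

end
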